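(* Let $d\ge1$ be odd, $\mathcal{H}=\mathbb{C}^d$ and $\mathcal{K}=\mathbb{C}^2$. Suppose there exists a quaternion matrix $A\in\mathbb{H}^{d\times d}$ which is Hermitian ($A^\dagger=A$), satisfies $\operatorname{Re}A=0$ (every entry has zero real part), and has eigenvalue $d-1$ with multiplicity $\frac{d+1}2$ and eigenvalue $-(d+1)$ with multiplicity $\frac{d-1}2$. Then there exists a unitary $U\in\mathcal{B}(\mathcal{H}\otimes\mathcal{K})$ with $$\frac1{2d}\operatorname{tr}\big[U\,\overline U^{T_2}\big]=-1+\frac2{d^2}.$$
   Context: Quaternions $q=x_0+x_1i+x_2j+x_3k$ are identified with complex $2\times2$ matrices via $\hat q=\begin{pmatrix}x_0+ix_1&x_2+ix_3\\-x_2+ix_3&x_0-ix_1\end{pmatrix}$; a matrix $A\in\mathbb{H}^{d\times d}$ is identified with the complex $2d\times2d$ matrix $\hat A$ consisting of the $2\times2$ blocks $\hat A_{kl}$, i.e. with an element of $\mathcal{M}_d(\mathbb{C})\otimes\mathcal{M}_2(\mathbb{C})\cong\mathcal{B}(\mathcal{H}\otimes\mathcal{K})$. $A^\dagger$ is the quaternionic conjugate transpose (corresponding to $\hat A^\dagger$), $\operatorname{Re}q=x_0$. The eigenvalues of a quaternion matrix $A$ (right eigenvalues $Ax=x\lambda$) are the complex eigenvalues of $\hat A$ with nonnegative imaginary part; for Hermitian $A$ they are real, and an eigenvalue of $A$ of multiplicity $m$ is an eigenvalue of $\hat A$ of multiplicity $2m$. The partial transpose $T_2$ acts on the $\mathcal{K}$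 factor in the product basis, $(X\otimes Y)^{T_2}=X\otimes Y^T$, and $\overline U$ is the entrywise complex conjugate. *)

theory Defs
  imports Complex_Main "Jordan_Normal_Form.Char_Poly"
begin

datatype quat = Quat (qx0: real) (qx1: real) (qx2: real) (qx3: real)

definition qRe :: "quat \<Rightarrow> real" where "qRe q = qx0 q"
definition qconj :: "quat \<Rightarrow> quat" where
  "qconj q = Quat (qx0 q) (- qx1 q) (- qx2 q) (- qx3 q)"

definition qhat :: "quat \<Rightarrow> nat \<Rightarrow> nat \<Rightarrow> complex" where
  "qhat q a b =
     (if a = 0 \<and> b = 0 then Complex (qx0 q) (qx1 q)
      else if a = 0 \<and> b = 1 then Complex (qx2 q) (qx3 q)
      else if a = 1 \<and> b = 0 then Complex (- qx2 q) (qx3 q)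
      else Complex (qx0 q) (- qx1 q))"

text \<open>A d x d quaternion matrix is a function on indices k,l < d.
  Its complex representation is the 2d x 2d matrix made of the 2x2 blocks qhat (A k l);
  index (k,a) of H \<otimes> K corresponds to 2k+a.\<close>
definition qmat_hat :: "nat \<Rightarrow> (nat \<Rightarrow> nat \<Rightarrow> quat) \<Rightarrow> complex mat" where
  "qmat_hat d A = mat (2*d) (2*d) (\<lambda>(i,j). qhat (A (i div 2) (j div 2)) (i mod 2) (j mod 2))"

definition qhermitian :: "nat \<Rightarrow> (nat \<Rightarrow> nat \<Rightarrow> quat) \<Rightarrow> bool" where
  "qhermitian d A \<longleftrightarrow> (\<forall>k<d. \<forall>l<d. A k l = qconj (A l k))"

definition cadj :: "complex mat \<Rightarrow> complex mat" where
  "cadj U = mat (dim_col U) (dim_row U) (\<lambda>(i,j). cnj (U $$ (j,i)))"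

definition cconj_mat :: "complex mat \<Rightarrow> complex mat" where
  "cconj_mat U = mat (dim_row U) (dim_col U) (\<lambda>(i,j). cnj (U $$ (i,j)))"

definition unitary_mat :: "nat \<Rightarrow> complex mat \<Rightarrow> bool" where
  "unitary_mat n U \<longleftrightarrow> U \<in> carrier_mat n n \<and> U * cadj U = 1\<^sub>m n \<and> cadj U * U = 1\<^sub>m n"

text \<open>Partial transpose on the second factor K = C^2 of H \<otimes> K, index (k,a) = 2k+a:
  X^T2((k,a),(l,b)) = X((k,b),(l,a)).\<close>
definition ptrans2 :: "complex mat \<Rightarrow> complex mat" where
  "ptrans2 X = mat (dim_row X) (dim_col X)
     (\<lambda>(i,j). X $$ (2*(i div 2) + j mod 2, 2*(j div 2) + i mod 2))"

definition mtrace :: "complex mat \<Rightarrow> complex" where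
  "mtrace X = (\<Sum>i<dim_row X. X $$ (i,i))"

end

theory Submission imports Defs "Jordan_Normal_Form.Schur_Decomposition" "Jordan_Normal_Form.Jordan_Normal_Form_Uniqueness"
begin

lemma mult_entry:
  assumes "A \<in> carrier_mat n n" "B \<in> carrier_mat n n" "i < n" "j < n"
  shows "(A*B)$$(i,j) = (\<Sum>k<n. A$$(i,k) * B$$(k,j))"
  using assms by (simp add: scalar_prod_def atLeast0LessThan)

definition mytr :: "nat \<Rightarrow> complex mat \<Rightarrow> complex" where
  "mytr n X = (\<Sum>i<n. X$$(i,i))"

lemma mytr_comm:
  assumes "A \<in> carrier_mat n n" "B \<in> carrier_mat n n"
  shows "mytr n (A*B) = mytr n (B*A)"
proof -
  have "mytr n (A*B) = (\<Sum>i<n. \<Sum>k<n. A$$(i,k) * B$$(k,i))"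
    unfolding mytr_def by (rule sum.cong[OF refl], rule mult_entry[OF assms]) auto
  also have "\<dots> = (\<Sum>k<n. \<Sum>i<n. B$$(k,i) * A$$(i,k))"
    by (subst sum.swap) (simp add: mult.commute)
  also have "\<dots> = mytr n (B*A)"
    unfolding mytr_def by (rule sum.cong[OF refl], rule mult_entry[OF assms(2,1), symmetric]) auto
  finally show ?thesis .
qed

lemma ut_prod:
  assumes X: "X \<in> carrier_mat n n" and Y: "Y \<in> carrier_mat n n"
    and ux: "upper_triangular X" and uy: "upper_triangular Y"
    and ij: "j \<le> i" "i < n"
  shows "(X*Y)$$(i,j) = (if i = j then X$$(i,i) * Y$$(i,i) else 0)"
proof -
  have "(X*Y)$$(i,j) = (\<Sum>k<n. X$$(i,k) * Y$$(k,j))" by (rule mult_entry[OF X Y]) (use ij in auto)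
  also have "\<dots> = (\<Sum>k<n. if k = i \<and> i = j then X$$(i,i) * Y$$(i,i) else 0)"
  proof (rule sum.cong[OF refl])
    fix k assume k: "k \<in> {..<n}"
    show "X$$(i,k) * Y$$(k,j) = (if k = i \<and> i = j then X$$(i,i) * Y$$(i,i) else 0)"
    proof (cases "k < i")
      case True thus ?thesis using ux X ij by (auto simp: upper_triangular_def)
    next
      case False
      show ?thesis
      proof (cases "k = i \<and> i = j")
        case True thus ?thesis by auto
      next
        case F: False
        with False ij have "j < k" by auto
        thus ?thesis using uy Y k F by (auto simp: upper_triangular_def)
      qed
    qed
  qed
  also have "\<dots> = (if i = j then X$$(i,i) * Y$$(i,i) else 0)"
    using ij by (auto simp: sum.delta)
  finally show ?thesis .
qed

lemma char_prod:
  assumes M: "M \<in> carrier_mat n n"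
  shows "char_matrix M s * char_matrix M (-s) = M*M + (-(s*s)) \<cdot>\<^sub>m 1\<^sub>m n"
proof (rule eq_matI)
  fix i j assume ij: "i < dim_row (M*M + (-(s*s)) \<cdot>\<^sub>m 1\<^sub>m n)" "j < dim_col (M*M + (-(s*s)) \<cdot>\<^sub>m 1\<^sub>m n)"
  hence i: "i < n" and j: "j < n" by auto
  have "(char_matrix M s * char_matrix M (-s))$$(i,j) =
     (\<Sum>k<n. (M$$(i,k) - s * (if i = k then 1 else 0)) * (M$$(k,j) + s * (if k = j then 1 else 0)))"
    using M i j by (subst mult_entry[of _ n]) (auto simp: char_matrix_def intro!: sum.cong)
  also have "\<dots> = (\<Sum>k<n. M$$(i,k) * M$$(k,j)) + s * M$$(i,j) - s * M$$(i,j) - s*s*(if i = j then 1 else 0)"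
  proof -
    have "(\<Sum>k<n. (M$$(i,k) - s * (if i = k then 1 else 0)) * (M$$(k,j) + s * (if k = j then 1 else 0)))
      = (\<Sum>k<n. M$$(i,k) * M$$(k,j) + s * (if k = j then M$$(i,k) else 0) - s * (if i = k then M$$(k,j) else 0)
           - s * s * (if i = k then (if k = j then 1 else 0) else 0))"
      by (rule sum.cong) (auto simp: algebra_simps)
    also have "\<dots> = (\<Sum>k<n. M$$(i,k) * M$$(k,j)) + s * (\<Sum>k<n. if k = j then M$$(i,k) else 0)
        - s * (\<Sum>k<n. if i = k then M$$(k,j) else 0) - s * s * (\<Sum>k<n. if i = k then (if k = j then 1 else 0) else 0)"
      by (simp only: sum.distrib sum_subtractf sum_distrib_left)
    also have "\<dots> = (\<Sum>k<n. M$$(i,k) * M$$(k,j)) + s * M$$(i,j) - s * M$$(i,j) - s*s*(if i = j then 1 else 0)"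
      using i j by (simp add: sum.delta sum.delta')
    finally show ?thesis .
  qed
  also have "\<dots> = (M*M + (-(s*s)) \<cdot>\<^sub>m 1\<^sub>m n)$$(i,j)"
    using M i j mult_entry[OF M M i j] by simp
  finally show "(char_matrix M s * char_matrix M (-s))$$(i,j) = (M*M + (-(s*s)) \<cdot>\<^sub>m 1\<^sub>m n)$$(i,j)" .
qed (use M in \<open>auto simp: char_matrix_def\<close>)

lemma char_prod2:
  assumes M: "M \<in> carrier_mat n n"
  shows "char_matrix M a * char_matrix M b = M*M + (-(a+b)) \<cdot>\<^sub>m M + (a*b) \<cdot>\<^sub>m 1\<^sub>m n"
proof (rule eq_matI)
  fix i j assume ij: "i < dim_row (M*M + (-(a+b)) \<cdot>\<^sub>m M + (a*b) \<cdot>\<^sub>m 1\<^sub>m n)"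
     "j < dim_col (M*M + (-(a+b)) \<cdot>\<^sub>m M + (a*b) \<cdot>\<^sub>m 1\<^sub>m n)"
  hence i: "i < n" and j: "j < n" by auto
  have "(char_matrix M a * char_matrix M b)$$(i,j) =
     (\<Sum>k<n. (M$$(i,k) - a * (if i = k then 1 else 0)) * (M$$(k,j) - b * (if k = j then 1 else 0)))"
    using M i j by (subst mult_entry[of _ n]) (auto simp: char_matrix_def intro!: sum.cong)
  also have "\<dots> = (\<Sum>k<n. M$$(i,k) * M$$(k,j)) - (a+b) * M$$(i,j) + a*b*(if i = j then 1 else 0)"
  proof -
    have "(\<Sum>k<n. (M$$(i,k) - a * (if i = k then 1 else 0)) * (M$$(k,j) - b * (if k = j then 1 else 0)))
      = (\<Sum>k<n. M$$(i,k) * M$$(k,j) - b * (if k = j then M$$(i,k) else 0) - a * (if i = k then M$$(k,j) else 0)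
           + a * b * (if i = k then (if k = j then 1 else 0) else 0))"
      by (rule sum.cong) (auto simp: algebra_simps)
    also have "\<dots> = (\<Sum>k<n. M$$(i,k) * M$$(k,j)) - b * (\<Sum>k<n. if k = j then M$$(i,k) else 0)
        - a * (\<Sum>k<n. if i = k then M$$(k,j) else 0) + a * b * (\<Sum>k<n. if i = k then (if k = j then 1 else 0) else 0)"
      by (simp only: sum.distrib sum_subtractf sum_distrib_left)
    also have "\<dots> = (\<Sum>k<n. M$$(i,k) * M$$(k,j)) - (a+b) * M$$(i,j) + a*b*(if i = j then 1 else 0)"
      using i j by (simp add: sum.delta sum.delta' algebra_simps)
    finally show ?thesis .
  qed
  also have "\<dots> = (M*M + (-(a+b)) \<cdot>\<^sub>m M + (a*b) \<cdot>\<^sub>m 1\<^sub>m n)$$(i,j)"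
    using M i j mult_entry[OF M M i j] by (simp add: algebra_simps)
  finally show "(char_matrix M a * char_matrix M b)$$(i,j) = (M*M + (-(a+b)) \<cdot>\<^sub>m M + (a*b) \<cdot>\<^sub>m 1\<^sub>m n)$$(i,j)" .
qed (use M in \<open>auto simp: char_matrix_def\<close>)

lemma herm_zero:
  assumes N: "N \<in> carrier_mat n n"
    and h: "\<And>i j. i < n \<Longrightarrow> j < n \<Longrightarrow> cnj (N$$(i,j)) = N$$(j,i)"
    and t: "mytr n (N*N) = 0"
    and ij: "i < n" "j < n"
  shows "N$$(i,j) = 0"
proof -
  have "mytr n (N*N) = (\<Sum>i<n. \<Sum>k<n. N$$(i,k) * N$$(k,i))"
    unfolding mytr_def by (rule sum.cong[OF refl], rule mult_entry[OF N N]) auto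
  also have "\<dots> = (\<Sum>i<n. \<Sum>k<n. complex_of_real ((cmod (N$$(i,k)))^2))"
  proof (intro sum.cong refl)
    fix i k assume "i \<in> {..<n}" "k \<in> {..<n}"
    hence "N$$(k,i) = cnj (N$$(i,k))" using h[of i k] by auto
    thus "N$$(i,k) * N$$(k,i) = complex_of_real ((cmod (N$$(i,k)))^2)"
      by (simp add: complex_norm_square del: of_real_power)
  qed
  also have "\<dots> = complex_of_real (\<Sum>i<n. \<Sum>k<n. (cmod (N$$(i,k)))^2)" by simp
  finally have e: "mytr n (N*N) = complex_of_real (\<Sum>i<n. \<Sum>k<n. (cmod (N$$(i,k)))^2)" .
  have "(\<Sum>i<n. \<Sum>k<n. (cmod (N$$(i,k)))^2) = 0" using t e of_real_eq_0_iff by metis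
  hence "\<forall>i\<in>{..<n}. (\<Sum>k<n. (cmod (N$$(i,k)))^2) = 0"
    by (subst sum_nonneg_eq_0_iff[symmetric]) (auto intro: sum_nonneg)
  hence "(\<Sum>k<n. (cmod (N$$(i,k)))^2) = 0" using ij by auto
  hence "\<forall>k\<in>{..<n}. (cmod (N$$(i,k)))^2 = 0"
    by (subst sum_nonneg_eq_0_iff[symmetric]) auto
  thus ?thesis using ij by auto
qed

lemma mc: "A \<in> carrier_mat n n \<Longrightarrow> B \<in> carrier_mat n n \<Longrightarrow> A*B \<in> carrier_mat n n"
  by auto

lemma herm_sq:
  assumes M: "M \<in> carrier_mat n n"
    and h: "\<And>i j. i < n \<Longrightarrow> j < n \<Longrightarrow> cnj (M$$(i,j)) = M$$(j,i)"
    and ij: "i < n" "j < n"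
  shows "cnj ((M*M)$$(i,j)) = (M*M)$$(j,i)"
proof -
  have "cnj ((M*M)$$(i,j)) = (\<Sum>k<n. cnj (M$$(i,k)) * cnj (M$$(k,j)))"
    by (simp add: mult_entry[OF M M ij])
  also have "\<dots> = (\<Sum>k<n. M$$(j,k) * M$$(k,i))"
    by (rule sum.cong) (auto simp: h ij)
  also have "\<dots> = (M*M)$$(j,i)" by (simp add: mult_entry[OF M M ij(2,1)])
  finally show ?thesis .
qed

lemma key:
  fixes M :: "complex mat"
  assumes M: "M \<in> carrier_mat n n"
    and h: "\<And>i j. i < n \<Longrightarrow> j < n \<Longrightarrow> cnj (M$$(i,j)) = M$$(j,i)"
    and cp: "char_poly M = (\<Prod>e\<leftarrow>es. [:-e,1:])"
    and ev: "\<forall>e\<in>set es. e = a \<or> e = b"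
    and ra: "cnj a = a" "cnj b = b"
  shows "char_matrix M a * char_matrix M b = 0\<^sub>m n n"
proof -
  obtain B P Q where sd: "schur_decomposition M es = (B,P,Q)" by (cases "schur_decomposition M es") auto
  from schur_decomposition[OF M cp sd] have wit: "similar_mat_wit M B P Q"
    and ut: "upper_triangular B" and dg: "diag_mat B = es" by auto
  note w = similar_mat_witD2[OF M wit]
  have B: "B \<in> carrier_mat n n" and P: "P \<in> carrier_mat n n" and Q: "Q \<in> carrier_mat n n"
    and QP: "Q * P = 1\<^sub>m n" using w by auto
  have QPX: "Q * (P * X) = X" if X: "X \<in> carrier_mat n n" for X
  proof -
    have "Q * (P * X) = (Q * P) * X" using Q P X by simp
    also have "\<dots> = X" using QP X by simp
    finally show ?thesis .
  qed
  define Ya where "Ya = char_matrix B a"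
  define Yb where "Yb = char_matrix B b"
  have Ya: "Ya \<in> carrier_mat n n" and Yb: "Yb \<in> carrier_mat n n" using B by (auto simp: Ya_def Yb_def)
  have ea: "char_matrix M a = P * Ya * Q"
    using similar_mat_witD2(3)[OF _ similar_mat_wit_char_matrix[OF wit, of a]] M by (auto simp: Ya_def)
  have eb: "char_matrix M b = P * Yb * Q"
    using similar_mat_witD2(3)[OF _ similar_mat_wit_char_matrix[OF wit, of b]] M by (auto simp: Yb_def)
  define C where "C = Ya * Yb"
  have C: "C \<in> carrier_mat n n" using Ya Yb by (simp add: C_def)
  define N where "N = char_matrix M a * char_matrix M b"
  have N: "N \<in> carrier_mat n n" using M unfolding N_def by (intro mult_carrier_mat[of _ n n] char_matrix_closed)
  have NC: "N = P * (C * Q)"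
    unfolding N_def ea eb C_def using P Q Ya Yb by (simp add: QPX mc assoc_mult_mat[of _ n n _ n _ n])
  have NN: "N * N = P * ((C * C) * Q)"
    unfolding NC using P Q C by (simp add: QPX mc assoc_mult_mat[of _ n n _ n _ n])
  have "mytr n (N * N) = mytr n (((C * C) * Q) * P)"
    unfolding NN by (rule mytr_comm[OF P]) (use C Q in \<open>simp add: mc\<close>)
  also have "((C * C) * Q) * P = C * C" using C Q P QP by (simp add: mc assoc_mult_mat[of _ n n _ n _ n])
  finally have trN: "mytr n (N*N) = mytr n (C * C)" .
  have uYa: "upper_triangular Ya" using B ut by (auto simp: Ya_def char_matrix_def upper_triangular_def)
  have uYb: "upper_triangular Yb" using B ut by (auto simp: Yb_def char_matrix_def upper_triangular_def)
  have Cd: "C$$(i,j) = 0" if "j \<le> i" "i < n" for i j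
  proof -
    have "C$$(i,j) = (if i = j then Ya$$(i,i) * Yb$$(i,i) else 0)"
      unfolding C_def by (rule ut_prod[OF Ya Yb uYa uYb that])
    moreover have "B$$(i,i) \<in> set es" using dg B that
      by (auto simp: diag_mat_def)
    ultimately show ?thesis using ev that B by (auto simp: Ya_def Yb_def char_matrix_def)
  qed
  have uC: "upper_triangular C" using C Cd by (auto simp: upper_triangular_def)
  have "mytr n (C*C) = 0"
    unfolding mytr_def by (rule sum.neutral) (auto simp: ut_prod[OF C C uC uC] Cd)
  hence t: "mytr n (N*N) = 0" using trN by simp
  have hN: "cnj (N$$(i,j)) = N$$(j,i)" if "i < n" "j < n" for i j
    unfolding N_def char_prod2[OF M] using that M herm_sq[OF M h that] h[OF that] ra
    by simp
  show ?thesis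
    by (rule eq_matI) (use herm_zero[OF N hN t] N in \<open>auto simp: N_def[symmetric]\<close>)
qed


lemma qhat_cnj: "a < 2 \<Longrightarrow> b < 2 \<Longrightarrow> cnj (qhat q b a) = qhat (qconj q) a b"
  by (cases "a = 0"; cases "b = 0") (auto simp: qhat_def qconj_def complex_eq_iff)

lemma qhat_conj0: "qx0 q = 0 \<Longrightarrow> a < 2 \<Longrightarrow> b < 2 \<Longrightarrow> qhat (qconj q) a b = - qhat q a b"
  by (cases "a = 0"; cases "b = 0") (auto simp: qhat_def qconj_def complex_eq_iff)

lemma sum_pairs: "(\<And>k. k < (d::nat) \<Longrightarrow> f (2*k) + f (2*k+1) = (0::complex)) \<Longrightarrow> (\<Sum>i<2*d. f i) = 0"
proof (induction d)
  case 0 thus ?case by simp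
next
  case (Suc d)
  have e: "2 * Suc d = Suc (Suc (2*d))" by simp
  have "(\<Sum>i<2*Suc d. f i) = (\<Sum>i<2*d. f i) + (f (2*d) + f (2*d+1))"
    unfolding e by (simp add: add.assoc)
  thus ?case using Suc by simp
qed

lemma pq_facts:
  fixes i j d :: nat
  assumes "i < 2*d" "j < 2*d"
  shows "2*(i div 2) + j mod 2 < 2*d" "(2*(i div 2) + j mod 2) div 2 = i div 2"
    "(2*(i div 2) + j mod 2) mod 2 = j mod 2"
    "(2*(i div 2) + j mod 2 = 2*(j div 2) + i mod 2) = (i = j)"
proof -
  have "i div 2 < d" using assms by simp
  moreover have "j mod 2 < 2" by simp
  ultimately show "2*(i div 2) + j mod 2 < 2*d" by linarith
  show "(2*(i div 2) + j mod 2) div 2 = i div 2" by simp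
  show "(2*(i div 2) + j mod 2) mod 2 = j mod 2" by simp
  show "(2*(i div 2) + j mod 2 = 2*(j div 2) + i mod 2) = (i = j)"
  proof
    assume h: "2*(i div 2) + j mod 2 = 2*(j div 2) + i mod 2"
    hence "(2*(i div 2) + j mod 2) mod 2 = (2*(j div 2) + i mod 2) mod 2" by simp
    hence "j mod 2 = i mod 2" by simp
    with h have "i div 2 = j div 2" by simp
    with \<open>j mod 2 = i mod 2\<close> show "i = j" by (metis div_mult_mod_eq)
  qed simp
qed

lemma smult2:
  assumes X: "X \<in> carrier_mat n n" and Y: "Y \<in> carrier_mat n n"
  shows "(k \<cdot>\<^sub>m X) * (l \<cdot>\<^sub>m Y) = ((k * l)::complex) \<cdot>\<^sub>m (X * Y)"
proof -
  have "(k \<cdot>\<^sub>m X) * (l \<cdot>\<^sub>m Y) = k \<cdot>\<^sub>m (X * (l \<cdot>\<^sub>m Y))"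
    by (rule mult_smult_assoc_mat) (use X Y in auto)
  also have "X * (l \<cdot>\<^sub>m Y) = l \<cdot>\<^sub>m (X * Y)" by (rule mult_smult_distrib[OF X Y])
  finally show ?thesis by (intro eq_matI) (use X Y in auto)
qed

theorem proposition10:
  fixes d :: nat and A :: "nat \<Rightarrow> nat \<Rightarrow> quat"
  assumes "d \<ge> 1" and "odd d"
    and "qhermitian d A"
    and "\<forall>k<d. \<forall>l<d. qRe (A k l) = 0"
    and "char_poly (qmat_hat d A) =
           [:- (of_nat d - 1), 1:] ^ (2 * ((d + 1) div 2)) *
           [:of_nat d + 1, 1:] ^ (2 * ((d - 1) div 2))"
  shows "\<exists>U. unitary_mat (2*d) U \<and>
           mtrace (U * ptrans2 (cconj_mat U)) / (2 * of_nat d) = - 1 + 2 / (of_nat d)^2"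
proof -
  note d1 = assms(1) and od = assms(2) and qh = assms(3) and re0 = assms(4) and cp0 = assms(5)
  define n where "n = 2*d"
  define D :: complex where "D = of_nat d"
  have D0: "D \<noteq> 0" using d1 by (simp add: D_def)
  have cD: "cnj D = D" by (simp add: D_def)
  define H where "H = qmat_hat d A"
  have H: "H \<in> carrier_mat n n" by (simp add: H_def n_def qmat_hat_def)
  have Hij: "H$$(i,j) = qhat (A (i div 2) (j div 2)) (i mod 2) (j mod 2)" if "i < n" "j < n" for i j
    using that by (simp add: H_def n_def qmat_hat_def)
  have hH: "cnj (H$$(i,j)) = H$$(j,i)" if ij: "i < n" "j < n" for i j
  proof -
    have "A (j div 2) (i div 2) = qconj (A (i div 2) (j div 2))"
    proof -
      have "j div 2 < d" "i div 2 < d" using ij by (auto simp: n_def)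
      thus ?thesis using qh unfolding qhermitian_def by blast
    qed
    thus ?thesis using ij by (simp add: Hij qhat_cnj)
  qed
  define es where "es = replicate (d+1) (D-1) @ replicate (d-1) (-(D+1))"
  have e1: "2 * ((d + 1) div 2) = d + 1" and e2: "2 * ((d - 1) div 2) = d - 1" using od by auto
  have cp: "char_poly H = (\<Prod>e\<leftarrow>es. [:-e,1:])"
  proof -
    have "(\<Prod>e\<leftarrow>es. [:-e,1:]) = [:-(D-1),1:]^(d+1) * [:D+1,1:]^(d-1)"
      by (simp only: es_def map_append prod_list.append map_replicate prod_list_replicate minus_minus)
    thus ?thesis using cp0 unfolding H_def e1 e2 D_def by simp
  qed
  have ev: "\<forall>e\<in>set es. e = D - 1 \<or> e = -(D+1)" by (auto simp: es_def)
  have Z: "char_matrix H (D-1) * char_matrix H (-(D+1)) = 0\<^sub>m n n"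
    by (rule key[OF H hH cp ev]) (auto simp: cD)
  have HH: "(H*H)$$(i,j) = (D*D - 1) * (if i = j then 1 else 0) - 2 * H$$(i,j)" if "i < n" "j < n" for i j
  proof -
    have "(H*H + (-((D-1) + (-(D+1)))) \<cdot>\<^sub>m H + ((D-1)*(-(D+1))) \<cdot>\<^sub>m 1\<^sub>m n)$$(i,j) = 0"
      using Z char_prod2[OF H] that by simp
    thus ?thesis using that H by (simp add: algebra_simps)
  qed
  have HHr: "row H i \<bullet> col H j = (D*D - 1) * (if i = j then 1 else 0) - 2 * H$$(i,j)" if "i < n" "j < n" for i j
    using HH[OF that] that H by simp
  have trH: "(\<Sum>i<n. H$$(i,i)) = 0"
    unfolding n_def
  proof (rule sum_pairs)
    fix k assume k: "k < d"
    have a: "2*k < n" "2*k+1 < n" using k by (auto simp: n_def)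
    have q0: "qx0 (A k k) = 0" using re0 k by (auto simp: qRe_def)
    show "H$$(2*k,2*k) + H$$(2*k+1,2*k+1) = 0"
      using a q0 by (simp add: Hij qhat_def complex_eq_iff)
  qed
  define U where "U = (1/D) \<cdot>\<^sub>m char_matrix H (-1)"
  have CM: "char_matrix H e \<in> carrier_mat n n" for e using H by simp
  have U: "U \<in> carrier_mat n n" using H by (simp add: U_def)
  have Uij: "U$$(i,j) = (H$$(i,j) + (if i = j then 1 else 0)) / D" if "i < n" "j < n" for i j
    using that H by (simp add: U_def char_matrix_def)
  have cU: "cadj U = U"
  proof (rule eq_matI)
    fix i j assume "i < dim_row U" "j < dim_col U"
    hence ij: "i < n" "j < n" using U by auto
    show "cadj U $$ (i,j) = U $$ (i,j)"
      using ij U by (simp add: cadj_def Uij hH cD)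
  qed (use U in \<open>auto simp: cadj_def\<close>)
  have "U * U = ((1/D)*(1/D)) \<cdot>\<^sub>m (char_matrix H (-1) * char_matrix H (-1))"
    unfolding U_def by (rule smult2[OF CM CM])
  also have "\<dots> = 1\<^sub>m n"
  proof (rule eq_matI)
    fix i j assume "i < dim_row (1\<^sub>m n :: complex mat)" "j < dim_col (1\<^sub>m n :: complex mat)"
    hence ij: "i < n" "j < n" by auto
    show "(((1/D)*(1/D)) \<cdot>\<^sub>m (char_matrix H (-1) * char_matrix H (-1)))$$(i,j) = 1\<^sub>m n $$(i,j)"
      unfolding char_prod2[OF H] using ij H D0 by (simp add: HHr field_simps)
  qed (use H in \<open>auto simp: char_matrix_def\<close>)
  finally have UU: "U * U = 1\<^sub>m n" .
  have unit: "unitary_mat (2*d) U"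
    unfolding unitary_mat_def n_def[symmetric] using U UU cU by simp
  have V: "ptrans2 (cconj_mat U) = (-(1/D)) \<cdot>\<^sub>m char_matrix H 1"
  proof (rule eq_matI)
    fix i j assume "i < dim_row ((-(1/D)) \<cdot>\<^sub>m char_matrix H 1)" "j < dim_col ((-(1/D)) \<cdot>\<^sub>m char_matrix H 1)"
    hence ij: "i < n" "j < n" using H by (auto simp: char_matrix_def)
    define p where "p = 2*(i div 2) + j mod 2"
    define q where "q = 2*(j div 2) + i mod 2"
    have ij': "i < 2*d" "j < 2*d" using ij by (auto simp: n_def)
    note f1 = pq_facts[OF ij'] and f2 = pq_facts[OF ij'(2,1)]
    have pq: "p < n" "q < n" "p div 2 = i div 2" "p mod 2 = j mod 2" "q div 2 = j div 2" "q mod 2 = i mod 2"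
      "(p = q) = (i = j)"
      unfolding p_def q_def n_def using f1 f2 by blast+
    have q0: "qx0 (A (i div 2) (j div 2)) = 0" using re0 ij by (auto simp: qRe_def n_def)
    have "ptrans2 (cconj_mat U) $$ (i,j) = cnj (U$$(p,q))"
      using ij pq U by (simp add: ptrans2_def cconj_mat_def p_def q_def)
    also have "\<dots> = (cnj (H$$(p,q)) + (if i = j then 1 else 0)) / D"
      using pq by (simp add: Uij cD)
    also have "cnj (H$$(p,q)) = - H$$(i,j)"
      using pq ij q0 by (simp add: Hij qhat_cnj qhat_conj0)
    finally show "ptrans2 (cconj_mat U) $$ (i,j) = ((-(1/D)) \<cdot>\<^sub>m char_matrix H 1) $$ (i,j)"
      using ij H D0 by (simp add: char_matrix_def field_simps)
  qed (use U H in \<open>auto simp: ptrans2_def cconj_mat_def char_matrix_def\<close>)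
  have "U * ptrans2 (cconj_mat U) = ((1/D)*(-(1/D))) \<cdot>\<^sub>m (char_matrix H (-1) * char_matrix H 1)"
    unfolding V by (unfold U_def, rule smult2[OF CM CM])
  also have "\<dots> = ((1/D)*(-(1/D))) \<cdot>\<^sub>m (H*H + 0 \<cdot>\<^sub>m H + (-1) \<cdot>\<^sub>m 1\<^sub>m n)"
    using char_prod2[OF H, of "-1" 1] by simp
  finally have UV: "U * ptrans2 (cconj_mat U) = ((1/D)*(-(1/D))) \<cdot>\<^sub>m (H*H + 0 \<cdot>\<^sub>m H + (-1) \<cdot>\<^sub>m 1\<^sub>m n)" .
  have "mtrace (U * ptrans2 (cconj_mat U)) = (\<Sum>i<n. (2 - D*D)/(D*D) + (2/(D*D)) * H$$(i,i))"
    unfolding mtrace_def UV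
  proof (rule sum.cong)
    show "{..<dim_row (((1/D)*(-(1/D))) \<cdot>\<^sub>m (H*H + 0 \<cdot>\<^sub>m H + (-1) \<cdot>\<^sub>m 1\<^sub>m n))} = {..<n}"
      using H by simp
  next
    fix i assume "i \<in> {..<n}"
    hence i: "i < n" by auto
    show "(((1/D)*(-(1/D))) \<cdot>\<^sub>m (H*H + 0 \<cdot>\<^sub>m H + (-1) \<cdot>\<^sub>m 1\<^sub>m n)) $$ (i,i) = (2 - D*D)/(D*D) + (2/(D*D)) * H$$(i,i)"
      using i H D0 by (simp add: HHr field_simps)
  qed
  also have "\<dots> = of_nat n * ((2 - D*D)/(D*D)) + (2/(D*D)) * (\<Sum>i<n. H$$(i,i))"
    by (simp add: sum.distrib sum_distrib_left)
  also have "\<dots> = 2 * D * ((2 - D*D)/(D*D))" using trH by (simp add: n_def D_def)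
  finally have tr: "mtrace (U * ptrans2 (cconj_mat U)) = 2 * D * ((2 - D*D)/(D*D))" .
  have "mtrace (U * ptrans2 (cconj_mat U)) / (2 * D) = (2 - D*D)/(D*D)" unfolding tr using D0 by (metis mult_eq_0_iff nonzero_mult_div_cancel_left zero_neq_numeral)
  also have "\<dots> = - 1 + 2 / D^2" using D0 by (simp add: field_simps power2_eq_square)
  finally have "mtrace (U * ptrans2 (cconj_mat U)) / (2 * of_nat d) = - 1 + 2 / (of_nat d)^2"
    unfolding D_def .
  with unit show ?thesis by blast
qed

end
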